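(* Let $\mathcal{G}$ be a grounded degree sandwich monotone graph class and let $(G,\omega)$ be a weighted graph. Then $(G,\omega)$ is a level-$\mathcal{G}$ weighted graph if and only if $G\in\mathcal{G}$ and every degree-minimal edge elimination scheme of $(G,\omega)$ is a sorted $\mathcal{G}$-safe edge elimination scheme.
   Context: All graphs are finite, simple and undirected. A weighted graph is a pair $(G,\omega)$ with $\omega:E(G)\to\{1,\dots,k\}$ surjective for some $k\ge1$. For $1\le i\le k+1$, the $i$-th level graph of $(G,\omega)$ is obtained from $G$ by removing all edges $e$ with $\omega(e)<i$; $(G,\omega)$ is level-$\mathcal{G}$ if all level graphs are in $\mathcal{G}$. For $G\in\mathcal{G}$, $F\subseteq E(G)$ (resp. edge $e$) is $\mathcal{G}$-safe if $G-F\in\mathcal{G}$ (resp. $G-e\in\mathcal{G}$); $\mathcal{G}$ is grounded if $E(G)$ is $\mathcal{G}$-safe for every $G\in\mathcal{G}$. Given a graph $H$ and $F\subseteq E(H)$, an edge $e\in F$ is degree-minimal in $F$ if its endpoints can be named $u,v$ so that (i) $u$ has the smallest degree in $H$ among all vertices incident to an edge of $F$, and (ii) $v$ has the smallest degree in $H$ among all $w$ with $uw\in F$. $\mathcal{G}$ is degree sandwich monotone if for each $G\in\mathcal{G}$ and each $\mathcal{G}$-safe $F\subseteq E(G)$, every degree-minimal edge in $F$ is $\mathcal{G}$-safe. For an edge ordering $\tau=(e_1,\dots,e_m)$ let $G^i_\tau=G-\{e_1,\dots,e_i\}$, $G^0_\tau=G$. A $\mathcal{G}$-safe edge elimination scheme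 of $G$ is an edge ordering with $G^i_\tau\in\mathcal{G}$ for all $i\in\{1,\dots,m\}$; it is sorted if $i<j$ implies $\omega(e_i)\le\omega(e_j)$. A degree-minimal edge elimination scheme of $(G,\omega)$ is an edge ordering such that for every $i$, $e_i$ is degree-minimal (degrees in $G^{i-1}_\tau$) in the set of minimum-weight edges of $G^{i-1}_\tau$. *)

theory Defs
  imports Main
begin

type_synonym 'a graph = "'a set \<times> 'a set set"

definition graph :: "'a graph \<Rightarrow> bool" where
  "graph G \<longleftrightarrow> finite (fst G) \<and>
     (\<forall>e\<in>snd G. \<exists>u v. e = {u, v} \<and> u \<noteq> v \<and> u \<in> fst G \<and> v \<in> fst G)"

definition del_edges :: "'a graph \<Rightarrow> 'a set set \<Rightarrow> 'a graph" where
  "del_edges G F = (fst G, snd G - F)"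

definition deg :: "'a set set \<Rightarrow> 'a \<Rightarrow> nat" where
  "deg E v = card {e \<in> E. v \<in> e}"

definition safe :: "'a graph set \<Rightarrow> 'a graph \<Rightarrow> 'a set set \<Rightarrow> bool" where
  "safe \<G> G F \<longleftrightarrow> del_edges G F \<in> \<G>"

definition grounded :: "'a graph set \<Rightarrow> bool" where
  "grounded \<G> \<longleftrightarrow> (\<forall>G\<in>\<G>. graph G \<longrightarrow> safe \<G> G (snd G))"

definition degree_minimal :: "'a set set \<Rightarrow> 'a set set \<Rightarrow> 'a set \<Rightarrow> bool" where
  "degree_minimal E F e \<longleftrightarrow> e \<in> F \<and>
     (\<exists>u v. e = {u, v} \<and>
        (\<forall>w. (\<exists>f\<in>F. w \<in> f) \<longrightarrow> deg E u \<le> deg E w) \<and>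
        (\<forall>w. {u, w} \<in> F \<longrightarrow> deg E v \<le> deg E w))"

definition degree_sandwich_monotone :: "'a graph set \<Rightarrow> bool" where
  "degree_sandwich_monotone \<G> \<longleftrightarrow>
     (\<forall>G\<in>\<G>. graph G \<longrightarrow> (\<forall>F. F \<subseteq> snd G \<longrightarrow> safe \<G> G F \<longrightarrow>
        (\<forall>e. degree_minimal (snd G) F e \<longrightarrow> safe \<G> G {e})))"

definition weighted_graph :: "'a graph \<Rightarrow> ('a set \<Rightarrow> nat) \<Rightarrow> nat \<Rightarrow> bool" where
  "weighted_graph G \<omega> k \<longleftrightarrow> graph G \<and> k \<ge> 1 \<and> \<omega> ` snd G = {1..k}"

definition level_graph :: "'a graph \<Rightarrow> ('a set \<Rightarrow> nat) \<Rightarrow> nat \<Rightarrow> 'a graph" where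
  "level_graph G \<omega> i = del_edges G {e \<in> snd G. \<omega> e < i}"

definition level_class :: "'a graph set \<Rightarrow> 'a graph \<Rightarrow> ('a set \<Rightarrow> nat) \<Rightarrow> nat \<Rightarrow> bool" where
  "level_class \<G> G \<omega> k \<longleftrightarrow> (\<forall>i\<in>{1..k+1}. level_graph G \<omega> i \<in> \<G>)"

definition edge_ordering :: "'a graph \<Rightarrow> 'a set list \<Rightarrow> bool" where
  "edge_ordering G \<tau> \<longleftrightarrow> distinct \<tau> \<and> set \<tau> = snd G"

definition step_graph :: "'a graph \<Rightarrow> 'a set list \<Rightarrow> nat \<Rightarrow> 'a graph" where
  "step_graph G \<tau> i = del_edges G (set (take i \<tau>))"

definition safe_scheme :: "'a graph set \<Rightarrow> 'a graph \<Rightarrow> 'a set list \<Rightarrow> bool" where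
  "safe_scheme \<G> G \<tau> \<longleftrightarrow> edge_ordering G \<tau> \<and>
     (\<forall>i\<in>{1..length \<tau>}. step_graph G \<tau> i \<in> \<G>)"

definition sorted_scheme :: "('a set \<Rightarrow> nat) \<Rightarrow> 'a set list \<Rightarrow> bool" where
  "sorted_scheme \<omega> \<tau> \<longleftrightarrow> (\<forall>i j. i < j \<and> j < length \<tau> \<longrightarrow> \<omega> (\<tau> ! i) \<le> \<omega> (\<tau> ! j))"

definition min_weight_edges :: "('a set \<Rightarrow> nat) \<Rightarrow> 'a set set \<Rightarrow> 'a set set" where
  "min_weight_edges \<omega> E = {e \<in> E. \<forall>f\<in>E. \<omega> e \<le> \<omega> f}"

definition degree_minimal_scheme :: "'a graph \<Rightarrow> ('a set \<Rightarrow> nat) \<Rightarrow> 'a set list \<Rightarrow> bool" where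
  "degree_minimal_scheme G \<omega> \<tau> \<longleftrightarrow> edge_ordering G \<tau> \<and>
     (\<forall>i < length \<tau>. let H = snd (step_graph G \<tau> i) in
        degree_minimal H (min_weight_edges \<omega> H) (\<tau> ! i))"

end

theory Submission
  imports Defs
begin

lemma least_exists:
  fixes m :: "'b \<Rightarrow> nat"
  assumes "P k" shows "\<exists>x. P x \<and> (\<forall>y. P y \<longrightarrow> m x \<le> m y)"
  using arg_min_nat_lemma[of P k m] assms by blast

lemma dm_exists:
  assumes "F \<noteq> {}" "\<forall>f\<in>F. \<exists>a b. f = {a, b}"
  shows "\<exists>e. degree_minimal E F e"
proof -
  from assms(1) obtain f0 where f0: "f0 \<in> F" by blast
  then obtain a b where ab: "f0 = {a,b}" using assms(2) by blast
  have "\<exists>f\<in>F. a \<in> f" using f0 ab by blast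
  then obtain u where u: "\<exists>f\<in>F. u \<in> f" and umin: "\<forall>w. (\<exists>f\<in>F. w \<in> f) \<longrightarrow> deg E u \<le> deg E w"
    using least_exists[of "\<lambda>w. \<exists>f\<in>F. w \<in> f" a "deg E"] by blast
  from u obtain f1 where f1: "f1 \<in> F" "u \<in> f1" by blast
  then obtain c d where cd: "f1 = {c,d}" using assms(2) by blast
  have "\<exists>w0. {u, w0} \<in> F"
  proof (cases "u = c")
    case True
    then show ?thesis using f1 cd by blast
  next
    case False
    then have "u = d" using f1 cd by blast
    then have "{u, c} = f1" using cd by (simp add: insert_commute)
    then show ?thesis using f1 by blast
  qed
  then obtain w0 where "{u,w0} \<in> F" by blast
  then obtain v where v: "{u,v} \<in> F" and vmin: "\<forall>w. {u,w} \<in> F \<longrightarrow> deg E v \<le> deg E w"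
    using least_exists[of "\<lambda>w. {u,w} \<in> F" w0 "deg E"] by blast
  show ?thesis unfolding degree_minimal_def using v vmin umin by blast
qed

lemma mwe_nonempty:
  assumes "S \<noteq> {}" shows "min_weight_edges \<omega> S \<noteq> {}"
proof -
  from assms obtain e0 where "e0 \<in> S" by blast
  then obtain e where "e \<in> S" "\<forall>f. f \<in> S \<longrightarrow> \<omega> e \<le> \<omega> f"
    using least_exists[of "\<lambda>e. e \<in> S" e0 \<omega>] by blast
  then show ?thesis unfolding min_weight_edges_def by blast
qed

lemma scheme_exists_aux:
  assumes "finite S" "\<forall>f\<in>S. \<exists>a b. f = {a, b}"
  shows "\<exists>\<tau>. distinct \<tau> \<and> set \<tau> = S \<and> (\<forall>i<length \<tau>. let H = S - set (take i \<tau>) in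
           degree_minimal H (min_weight_edges \<omega> H) (\<tau> ! i))"
  using assms
proof (induction S rule: finite_psubset_induct)
  case (psubset S)
  show ?case
  proof (cases "S = {}")
    case True
    then show ?thesis by (intro exI[of _ "[]"]) simp
  next
    case False
    have "min_weight_edges \<omega> S \<noteq> {}" using mwe_nonempty[OF False] .
    moreover have "\<forall>f\<in>min_weight_edges \<omega> S. \<exists>a b. f = {a, b}"
      using psubset.prems unfolding min_weight_edges_def by blast
    ultimately obtain e where e: "degree_minimal S (min_weight_edges \<omega> S) e"
      using dm_exists by blast
    hence eS: "e \<in> S" unfolding degree_minimal_def min_weight_edges_def by blast
    have "S - {e} \<subset> S" using eS by blast
    then obtain \<tau> where t: "distinct \<tau>" "set \<tau> = S - {e}"
      "\<forall>i<length \<tau>. let H = (S - {e}) - set (take i \<tau>) in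
           degree_minimal H (min_weight_edges \<omega> H) (\<tau> ! i)"
      using psubset.IH[of "S - {e}"] psubset.prems by blast
    show ?thesis
    proof (intro exI[of _ "e # \<tau>"] conjI allI impI)
      show "distinct (e # \<tau>)" using t by simp
      show "set (e # \<tau>) = S" using t eS by auto
      fix i assume i: "i < length (e # \<tau>)"
      show "let H = S - set (take i (e # \<tau>)) in
           degree_minimal H (min_weight_edges \<omega> H) ((e # \<tau>) ! i)"
      proof (cases i)
        case 0
        then show ?thesis using e by simp
      next
        case (Suc i')
        have "S - set (take i (e # \<tau>)) = (S - {e}) - set (take i' \<tau>)" using Suc by auto
        then show ?thesis using t(3) Suc i by (simp add: Let_def)
      qed
    qed
  qed
qed

lemma graph_edges:
  assumes "graph G" shows "finite (snd G)" "\<forall>f\<in>snd G. \<exists>a b. f = {a, b}"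
proof -
  have fin: "finite (fst G)" and ed: "\<forall>e\<in>snd G. \<exists>u v. e = {u, v} \<and> u \<noteq> v \<and> u \<in> fst G \<and> v \<in> fst G"
    using assms unfolding graph_def by auto
  have "snd G \<subseteq> Pow (fst G)"
  proof
    fix e assume "e \<in> snd G"
    then obtain u v where "e = {u, v}" "u \<in> fst G" "v \<in> fst G" using ed by blast
    then show "e \<in> Pow (fst G)" by simp
  qed
  moreover have "finite (Pow (fst G))" using fin by simp
  ultimately show "finite (snd G)" by (rule finite_subset)
  show "\<forall>f\<in>snd G. \<exists>a b. f = {a, b}" using ed by blast
qed

lemma snd_step: "snd (step_graph G \<tau> i) = snd G - set (take i \<tau>)"
  unfolding step_graph_def del_edges_def by simp

lemma scheme_exists:
  assumes "graph G" shows "\<exists>\<tau>. degree_minimal_scheme G \<omega> \<tau>"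
proof -
  obtain \<tau> where t: "distinct \<tau>" "set \<tau> = snd G" "\<forall>i<length \<tau>. let H = snd G - set (take i \<tau>) in
           degree_minimal H (min_weight_edges \<omega> H) (\<tau> ! i)"
    using scheme_exists_aux[OF graph_edges[OF assms], of \<omega>] by blast
  then show ?thesis unfolding degree_minimal_scheme_def edge_ordering_def snd_step by blast
qed

lemma not_in_take:
  assumes "distinct \<tau>" "i \<le> j" "j < length \<tau>"
  shows "\<tau> ! j \<notin> set (take i \<tau>)"
proof
  assume "\<tau> ! j \<in> set (take i \<tau>)"
  then obtain l where l: "l < length (take i \<tau>)" "take i \<tau> ! l = \<tau> ! j"
    by (auto simp: in_set_conv_nth)
  then have "l < i" "\<tau> ! l = \<tau> ! j" by auto
  then show False using assms nth_eq_iff_index_eq[of \<tau> l j] by auto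
qed

lemma dm_min:
  assumes "degree_minimal_scheme G \<omega> \<tau>" "i \<le> j" "j < length \<tau>"
  shows "\<omega> (\<tau> ! i) \<le> \<omega> (\<tau> ! j)"
proof -
  let ?H = "snd (step_graph G \<tau> i)"
  have "degree_minimal ?H (min_weight_edges \<omega> ?H) (\<tau> ! i)"
    using assms unfolding degree_minimal_scheme_def by (simp add: Let_def)
  hence m: "\<forall>f\<in>?H. \<omega> (\<tau> ! i) \<le> \<omega> f"
    unfolding degree_minimal_def min_weight_edges_def by blast
  have "\<tau> ! j \<in> set \<tau>" using assms(3) by simp
  hence "\<tau> ! j \<in> ?H" using not_in_take[of \<tau> i j] assms
    unfolding snd_step degree_minimal_scheme_def edge_ordering_def by auto
  then show ?thesis using m by blast
qed

lemma dm_sorted: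
  assumes D: "degree_minimal_scheme G \<omega> \<tau>" shows "sorted_scheme \<omega> \<tau>"
  unfolding sorted_scheme_def
proof (intro allI impI)
  fix i j assume "i < j \<and> j < length \<tau>"
  then show "\<omega> (\<tau> ! i) \<le> \<omega> (\<tau> ! j)" using dm_min[OF D, of i j] by simp
qed

lemma step_Suc: "i < length \<tau> \<Longrightarrow> step_graph G \<tau> (Suc i) = del_edges (step_graph G \<tau> i) {\<tau> ! i}"
  unfolding step_graph_def del_edges_def by (auto simp: take_Suc_conv_app_nth)

lemma graph_del: "graph G \<Longrightarrow> graph (del_edges G F)"
  unfolding graph_def del_edges_def by simp

lemma del_empty: "del_edges G {} = G"
  unfolding del_edges_def by simp

theorem lemma3p1:
  fixes \<G> :: "'a graph set" and G :: "'a graph" and \<omega> :: "'a set \<Rightarrow> nat" and k :: nat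
  assumes "grounded \<G>"
    and "degree_sandwich_monotone \<G>"
    and "weighted_graph G \<omega> k"
  shows "level_class \<G> G \<omega> k \<longleftrightarrow>
    (G \<in> \<G> \<and> (\<forall>\<tau>. degree_minimal_scheme G \<omega> \<tau> \<longrightarrow>
                    safe_scheme \<G> G \<tau> \<and> sorted_scheme \<omega> \<tau>))"
proof
  have gG: "graph G" and wimg: "\<omega> ` snd G = {1..k}" and k1: "k \<ge> 1"
    using assms(3) unfolding weighted_graph_def by auto
  assume L: "level_class \<G> G \<omega> k"
  have lv: "\<And>i. 1 \<le> i \<Longrightarrow> i \<le> k + 1 \<Longrightarrow> level_graph G \<omega> i \<in> \<G>"
    using L unfolding level_class_def by auto
  have pos: "\<forall>e\<in>snd G. 1 \<le> \<omega> e" using wimg by (metis atLeastAtMost_iff imageI)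
  have E1: "{e \<in> snd G. \<omega> e < 1} = {}" using pos by auto
  have "level_graph G \<omega> 1 = G" unfolding level_graph_def E1 del_empty by (rule refl)
  hence GG: "G \<in> \<G>" using lv[of 1] by simp
  show "G \<in> \<G> \<and> (\<forall>\<tau>. degree_minimal_scheme G \<omega> \<tau> \<longrightarrow>
                    safe_scheme \<G> G \<tau> \<and> sorted_scheme \<omega> \<tau>)"
  proof (intro conjI allI impI GG)
    fix \<tau> assume D: "degree_minimal_scheme G \<omega> \<tau>"
    show "sorted_scheme \<omega> \<tau>" using dm_sorted[OF D] .
    have eo: "distinct \<tau>" "set \<tau> = snd G" using D unfolding degree_minimal_scheme_def edge_ordering_def by auto
    have "\<forall>i. i \<le> length \<tau> \<longrightarrow> step_graph G \<tau> i \<in> \<G>"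
    proof
      fix i show "i \<le> length \<tau> \<longrightarrow> step_graph G \<tau> i \<in> \<G>"
      proof (induction i)
        case 0
        then show ?case using GG by (simp add: step_graph_def del_empty)
      next
        case (Suc i)
        show ?case
        proof
          assume si: "Suc i \<le> length \<tau>"
          hence il: "i < length \<tau>" by simp
          let ?H = "step_graph G \<tau> i"
          let ?F = "min_weight_edges \<omega> (snd ?H)"
          let ?w = "\<omega> (\<tau> ! i)"
          have HG: "?H \<in> \<G>" using Suc.IH il by simp
          have gH: "graph ?H" unfolding step_graph_def using graph_del[OF gG] .
          have dmi: "degree_minimal (snd ?H) ?F (\<tau> ! i)"
            using D il unfolding degree_minimal_scheme_def by (simp add: Let_def)
          hence tiF: "\<tau> ! i \<in> ?F" unfolding degree_minimal_def by blast
          hence wmin: "\<forall>f\<in>snd ?H. ?w \<le> \<omega> f" unfolding min_weight_edges_def by blast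
          have FH: "?F \<subseteq> snd ?H" unfolding min_weight_edges_def by blast
          have wk: "?w \<in> {1..k}" using wimg eo il by (metis image_eqI nth_mem)
          have eqs: "snd ?H - ?F = snd G - {e \<in> snd G. \<omega> e < ?w + 1}"
          proof
            show "snd ?H - ?F \<subseteq> snd G - {e \<in> snd G. \<omega> e < ?w + 1}"
            proof
              fix e assume e: "e \<in> snd ?H - ?F"
              have "e \<in> snd G" using e snd_step by (metis DiffD1)
              moreover have "\<omega> e > ?w"
              proof (rule ccontr)
                assume "\<not> \<omega> e > ?w"
                moreover have eH: "e \<in> snd ?H" using e by blast
                moreover have "?w \<le> \<omega> e" using wmin eH by blast
                ultimately have "\<omega> e = ?w" by simp
                hence "\<forall>f\<in>snd ?H. \<omega> e \<le> \<omega> f" using wmin by simp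
                hence "e \<in> ?F" using eH unfolding min_weight_edges_def by blast
                then show False using e by blast
              qed
              ultimately show "e \<in> snd G - {e \<in> snd G. \<omega> e < ?w + 1}" by auto
            qed
            show "snd G - {e \<in> snd G. \<omega> e < ?w + 1} \<subseteq> snd ?H - ?F"
            proof
              fix e assume e: "e \<in> snd G - {e \<in> snd G. \<omega> e < ?w + 1}"
              hence eG: "e \<in> snd G" and ew: "\<omega> e > ?w" by auto
              have "e \<notin> set (take i \<tau>)"
              proof
                assume "e \<in> set (take i \<tau>)"
                then obtain l where "l < i" "\<tau> ! l = e"
                  by (auto simp: in_set_conv_nth)
                then have "\<omega> e \<le> ?w" using dm_min[OF D, of l i] il by simp
                then show False using ew by simp
              qed
              hence "e \<in> snd ?H" using eG snd_step by (metis DiffI)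
              moreover have "e \<notin> ?F"
              proof
                assume "e \<in> ?F"
                hence "\<omega> e \<le> ?w" using tiF unfolding min_weight_edges_def by blast
                then show False using ew by simp
              qed
              ultimately show "e \<in> snd ?H - ?F" by blast
            qed
          qed
          have "del_edges ?H ?F = level_graph G \<omega> (?w + 1)"
            unfolding level_graph_def using eqs
            by (simp add: del_edges_def step_graph_def)
          hence "safe \<G> ?H ?F" unfolding safe_def using lv[of "?w + 1"] wk by auto
          hence "safe \<G> ?H {\<tau> ! i}"
            using assms(2) HG gH FH dmi unfolding degree_sandwich_monotone_def by blast
          then show "step_graph G \<tau> (Suc i) \<in> \<G>" unfolding safe_def using step_Suc[OF il] by simp
        qed
      qed
    qed
    then show "safe_scheme \<G> G \<tau>" unfolding safe_scheme_def using D
      unfolding degree_minimal_scheme_def by auto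
  qed
next
  have gG: "graph G" and wimg: "\<omega> ` snd G = {1..k}" and k1: "k \<ge> 1"
    using assms(3) unfolding weighted_graph_def by auto
  assume R: "G \<in> \<G> \<and> (\<forall>\<tau>. degree_minimal_scheme G \<omega> \<tau> \<longrightarrow>
                    safe_scheme \<G> G \<tau> \<and> sorted_scheme \<omega> \<tau>)"
  obtain \<tau> where D: "degree_minimal_scheme G \<omega> \<tau>" using scheme_exists[OF gG] by blast
  have S: "safe_scheme \<G> G \<tau>" and So: "sorted_scheme \<omega> \<tau>" using R D by auto
  have GG: "G \<in> \<G>" using R by blast
  have eo: "distinct \<tau>" "set \<tau> = snd G" using D unfolding degree_minimal_scheme_def edge_ordering_def by auto
  show "level_class \<G> G \<omega> k" unfolding level_class_def
  proof
    fix i assume "i \<in> {1..k+1}"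
    define j where "j = length (takeWhile (\<lambda>e. \<omega> e < i) \<tau>)"
    have tw: "takeWhile (\<lambda>e. \<omega> e < i) \<tau> = take j \<tau>" unfolding j_def by (rule takeWhile_eq_take)
    have jl: "j \<le> length \<tau>" unfolding j_def by (rule length_takeWhile_le)
    have seteq: "set (take j \<tau>) = {e \<in> snd G. \<omega> e < i}"
    proof
      show "set (take j \<tau>) \<subseteq> {e \<in> snd G. \<omega> e < i}"
      proof
        fix e assume "e \<in> set (take j \<tau>)"
        hence "e \<in> set (takeWhile (\<lambda>e. \<omega> e < i) \<tau>)" by (simp only: tw)
        hence "e \<in> set \<tau> \<and> \<omega> e < i" by (rule set_takeWhileD)
        then show "e \<in> {e \<in> snd G. \<omega> e < i}" using eo(2) by blast
      qed
      show "{e \<in> snd G. \<omega> e < i} \<subseteq> set (take j \<tau>)"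
      proof
        fix e assume e: "e \<in> {e \<in> snd G. \<omega> e < i}"
        have "e \<in> set \<tau>" using e eo by simp
        then obtain p where p: "p < length \<tau>" "\<tau> ! p = e" by (metis in_set_conv_nth)
        show "e \<in> set (take j \<tau>)"
        proof (cases "p < j")
          case True
          have "take j \<tau> ! p \<in> set (take j \<tau>)" by (rule nth_mem) (simp add: True p(1))
          then show ?thesis using True p(2) by (simp add: nth_take)
        next
          case False
          hence jlt: "j < length \<tau>" using p by simp
          have "\<not> \<omega> (\<tau> ! j) < i" using nth_length_takeWhile[of "\<lambda>e. \<omega> e < i" \<tau>] jlt unfolding j_def by simp
          moreover have "\<omega> (\<tau> ! j) \<le> \<omega> (\<tau> ! p)" using dm_min[OF D, of j p] False p by simp
          moreover have "\<omega> (\<tau> ! p) < i" using e p(2) by simp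
          ultimately have False by linarith
          then show ?thesis ..
        qed
      qed
    qed
    have lg: "level_graph G \<omega> i = step_graph G \<tau> j"
      unfolding level_graph_def step_graph_def seteq ..
    show "level_graph G \<omega> i \<in> \<G>"
    proof (cases "j = 0")
      case True
      then show ?thesis using lg GG by (simp add: step_graph_def del_empty)
    next
      case False
      then show ?thesis using lg S jl unfolding safe_scheme_def by auto
    qed
  qed
qed

end
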